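(* Let $f\colon E\to B$ be a uniformly expansive, homogeneous map of metric spaces. Assume that $B$ has straight finite decomposition complexity and that there exists $b_0\in B$ such that for each $r>0$ the space $f^{-1}(B_r(b_0))$ has straight finite decomposition complexity. Then $E$ has straight finite decomposition complexity. In particular, straight finite decomposition complexity satisfies the Homogeneous Fibering Theorem: if $f\colon E\to B$ is uniformly expansive and homogeneous, $B$ has sFDC, and $f^{-1}(D)$ has sFDC for every bounded $D\subset B$, then $E$ has sFDC.
   Context: $B_r(b_0)$ is the ball of radius $r$ about $b_0$. A map $f\colon X\to Y$ is uniformly expansive if there is a nondecreasing $\rho\colon[0,\infty)\to[0,\infty)$ with $d_Y(f(x),f(x'))\le\rho(d_X(x,x'))$ for all $x,x'$. It is homogeneous if for all $y_1,y_2\in f(X)$ there exist isometries $\phi\colon X\to X$, $\bar\phi\colon Y\to Y$ with $f\circ\phi=\bar\phi\circ f$ and $\bar\phi(y_1)=y_2$. A metric family is a set of metric spaces; it is uniformly bounded if the diameters of its members are uniformly bounded. An $r$-decomposition of a metric space $Z$ over a metric family $\mathcal{Y}$ is a decomposition $Z=Z_0\cup Z_1$ with each $Z_i=\bigsqcup_j Z_{ij}$ a union of pairwise $r$-disjoint subsets ($d(Z_{ij},Z_{ij'})>r$ for $j\neq j'$) and each $Z_{ij}\in\mathcal{Y}$; a family is $r$-decomposable over $\mathcal{Y}$ if each member admits an $r$-decomposition over $\mathcal{Y}$. A metric family $\mathcal{X}$ has straight finite decomposition complexity (sFDC) if for every sequence $R_1<R_2<\cdots$ of positive numbers there exist $n\in\mathbb{N}$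 and families $\mathcal{X}_0=\mathcal{X},\dots,\mathcal{X}_n$ with $\mathcal{X}_i$ $R_{i+1}$-decomposable over $\mathcal{X}_{i+1}$ for $i<n$ and $\mathcal{X}_n$ uniformly bounded. A metric space has sFDC if the family consisting of it alone does. *)

theory Defs
  imports "HOL-Analysis.Analysis"
begin

text \<open>Metric spaces are modelled as subsets of an ambient type of class metric_space,
  with the restricted metric. A metric family is a set of such subsets.\<close>

definition r_disjoint :: "real \<Rightarrow> 'a::metric_space set \<Rightarrow> 'a set \<Rightarrow> bool" where
  "r_disjoint r A C \<longleftrightarrow> (\<exists>s>r. \<forall>x\<in>A. \<forall>y\<in>C. s \<le> dist x y)"

definition r_disjoint_family :: "real \<Rightarrow> 'a::metric_space set set \<Rightarrow> bool" where
  "r_disjoint_family r \<Z> \<longleftrightarrow> (\<forall>A\<in>\<Z>. \<forall>C\<in>\<Z>. A \<noteq> C \<longrightarrow> r_disjoint r A C)"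

definition r_decomposition :: "real \<Rightarrow> 'a::metric_space set \<Rightarrow> 'a set set \<Rightarrow> 'a set set \<Rightarrow> 'a set set \<Rightarrow> bool" where
  "r_decomposition r Z \<Y> \<Z>0 \<Z>1 \<longleftrightarrow>
     Z = \<Union>\<Z>0 \<union> \<Union>\<Z>1 \<and> r_disjoint_family r \<Z>0 \<and> r_disjoint_family r \<Z>1 \<and>
     \<Z>0 \<subseteq> \<Y> \<and> \<Z>1 \<subseteq> \<Y>"

definition r_decomposable :: "real \<Rightarrow> 'a::metric_space set set \<Rightarrow> 'a set set \<Rightarrow> bool" where
  "r_decomposable r \<X> \<Y> \<longleftrightarrow> (\<forall>Z\<in>\<X>. \<exists>\<Z>0 \<Z>1. r_decomposition r Z \<Y> \<Z>0 \<Z>1)"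

definition uniformly_bounded :: "'a::metric_space set set \<Rightarrow> bool" where
  "uniformly_bounded \<X> \<longleftrightarrow> (\<exists>C. \<forall>Z\<in>\<X>. \<forall>x\<in>Z. \<forall>y\<in>Z. dist x y \<le> C)"

text \<open>Straight finite decomposition complexity; the sequence R_1 < R_2 < ... is indexed
  from 0 here, and family Xs i is (R i)-decomposable over Xs (i+1).\<close>
definition sFDC :: "'a::metric_space set set \<Rightarrow> bool" where
  "sFDC \<X> \<longleftrightarrow> (\<forall>R::nat \<Rightarrow> real. (\<forall>i. 0 < R i) \<and> strict_mono R \<longrightarrow>
     (\<exists>n Xs. Xs 0 = \<X> \<and> (\<forall>i<n. r_decomposable (R i) (Xs i) (Xs (Suc i))) \<and>
        uniformly_bounded (Xs n)))"

definition sFDC_space :: "'a::metric_space set \<Rightarrow> bool" where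
  "sFDC_space X \<longleftrightarrow> sFDC {X}"

definition uniformly_expansive :: "('a::metric_space \<Rightarrow> 'b::metric_space) \<Rightarrow> 'a set \<Rightarrow> bool" where
  "uniformly_expansive f X \<longleftrightarrow> (\<exists>\<rho>::real \<Rightarrow> real. mono_on {0..} \<rho> \<and> (\<forall>t\<ge>0. 0 \<le> \<rho> t) \<and>
     (\<forall>x\<in>X. \<forall>x'\<in>X. dist (f x) (f x') \<le> \<rho> (dist x x')))"

definition self_isometry :: "'a::metric_space set \<Rightarrow> ('a \<Rightarrow> 'a) \<Rightarrow> bool" where
  "self_isometry S \<phi> \<longleftrightarrow> bij_betw \<phi> S S \<and> (\<forall>x\<in>S. \<forall>y\<in>S. dist (\<phi> x) (\<phi> y) = dist x y)"

definition homogeneous :: "('a::metric_space \<Rightarrow> 'b::metric_space) \<Rightarrow> 'a set \<Rightarrow> 'b set \<Rightarrow> bool" where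
  "homogeneous f X Y \<longleftrightarrow> (\<forall>y1\<in>f ` X. \<forall>y2\<in>f ` X. \<exists>\<phi> \<psi>.
     self_isometry X \<phi> \<and> self_isometry Y \<psi> \<and> (\<forall>x\<in>X. f (\<phi> x) = \<psi> (f x)) \<and> \<psi> y1 = y2)"

end

theory Submission
  imports Defs
begin

definition dpres :: "('a::metric_space \<Rightarrow> 'a) \<Rightarrow> 'a set \<Rightarrow> bool" where
  "dpres g W \<longleftrightarrow> (\<forall>x\<in>W. \<forall>y\<in>W. dist (g x) (g y) = dist x y)"

definition Qfam :: "'a::metric_space set set \<Rightarrow> 'a set set" where
  "Qfam X = {T. \<exists>W\<in>X. \<exists>g. dpres g W \<and> T \<subseteq> g ` W}"

lemma decomp_mono: "r_decomposable r X Y \<Longrightarrow> X' \<subseteq> X \<Longrightarrow> r_decomposable r X' Y"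
  unfolding r_decomposable_def by blast

lemma ub_mono: "uniformly_bounded X \<Longrightarrow> X' \<subseteq> X \<Longrightarrow> uniformly_bounded X'"
  unfolding uniformly_bounded_def by blast

lemma Qfam_decomp:
  assumes "r_decomposable r X Y"
  shows "r_decomposable r (Qfam X) (Qfam Y)"
  unfolding r_decomposable_def
proof (intro ballI)
  fix T assume "T \<in> Qfam X"
  then obtain W g where W: "W \<in> X" "dpres g W" "T \<subseteq> g ` W" by (auto simp: Qfam_def)
  from assms W(1) obtain Z0 Z1 where d: "r_decomposition r W Y Z0 Z1"
    unfolding r_decomposable_def by blast
  have WU: "W = \<Union>Z0 \<union> \<Union>Z1" and dj0: "r_disjoint_family r Z0" and dj1: "r_disjoint_family r Z1"
    and s0: "Z0 \<subseteq> Y" and s1: "Z1 \<subseteq> Y" using d unfolding r_decomposition_def by auto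
  define h where "h V = T \<inter> g ` V" for V
  have union: "T = \<Union>(h ` Z0) \<union> \<Union>(h ` Z1)" using W(3) WU unfolding h_def by blast
  have sub: "h ` Zj \<subseteq> Qfam Y" if "Zj \<subseteq> Y" "\<Union>Zj \<subseteq> W" for Zj
  proof
    fix T' assume "T' \<in> h ` Zj"
    then obtain V where V: "V \<in> Zj" "T' = h V" by blast
    have "dpres g V" using W(2) V(1) that(2) unfolding dpres_def by blast
    then show "T' \<in> Qfam Y" using V that(1) unfolding Qfam_def h_def by blast
  qed
  have disj: "r_disjoint_family r (h ` Zj)" if dj: "r_disjoint_family r Zj" and sw: "\<Union>Zj \<subseteq> W" for Zj
    unfolding r_disjoint_family_def
  proof (intro ballI impI)
    fix P Q assume "P \<in> h ` Zj" "Q \<in> h ` Zj" "P \<noteq> Q"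
    then obtain V V' where V: "V \<in> Zj" "V' \<in> Zj" "P = h V" "Q = h V'" "V \<noteq> V'" by blast
    then obtain s where s: "s > r" "\<forall>x\<in>V. \<forall>y\<in>V'. s \<le> dist x y"
      using dj unfolding r_disjoint_family_def r_disjoint_def by blast
    show "r_disjoint r P Q" unfolding r_disjoint_def
    proof (intro exI[of _ s] conjI ballI)
      show "s > r" by fact
      fix a b assume "a \<in> P" "b \<in> Q"
      then obtain x y where xy: "x \<in> V" "y \<in> V'" "a = g x" "b = g y" using V unfolding h_def by blast
      have "x \<in> W" "y \<in> W" using xy V sw by blast+
      then have "dist a b = dist x y" using W(2) xy unfolding dpres_def by simp
      then show "s \<le> dist a b" using s xy by simp
    qed
  qed
  have "r_decomposition r T (Qfam Y) (h ` Z0) (h ` Z1)"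
    unfolding r_decomposition_def
    using union sub[OF s0] sub[OF s1] disj[OF dj0] disj[OF dj1] WU by blast
  then show "\<exists>Z0 Z1. r_decomposition r T (Qfam Y) Z0 Z1" by blast
qed

lemma sFDC_copies:
  assumes A: "sFDC {A}" and F: "\<forall>Z\<in>F. \<exists>g. dpres g A \<and> Z \<subseteq> g ` A"
  shows "sFDC F"
  unfolding sFDC_def
proof (intro allI impI)
  fix R :: "nat \<Rightarrow> real" assume R: "(\<forall>i. 0 < R i) \<and> strict_mono R"
  from A[unfolded sFDC_def, rule_format, OF R] obtain n Xs where X: "Xs 0 = {A}" "\<forall>i<n. r_decomposable (R i) (Xs i) (Xs (Suc i))"
    "uniformly_bounded (Xs n)" by blast
  have FQ: "F \<subseteq> Qfam (Xs 0)" using F X(1) by (auto simp: Qfam_def)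
  have ubQ: "uniformly_bounded (Qfam (Xs n))"
  proof -
    from X(3) obtain C where C: "\<forall>Z\<in>Xs n. \<forall>x\<in>Z. \<forall>y\<in>Z. dist x y \<le> C"
      unfolding uniformly_bounded_def by blast
    have "\<forall>T\<in>Qfam (Xs n). \<forall>a\<in>T. \<forall>b\<in>T. dist a b \<le> C"
    proof (intro ballI)
      fix T a b assume "T \<in> Qfam (Xs n)" "a \<in> T" "b \<in> T"
      then obtain W g where W: "W \<in> Xs n" "dpres g W" "T \<subseteq> g ` W" by (auto simp: Qfam_def)
      then obtain x y where "x \<in> W" "y \<in> W" "a = g x" "b = g y" using \<open>a \<in> T\<close> \<open>b \<in> T\<close> by blast
      then show "dist a b \<le> C" using W C unfolding dpres_def by auto
    qed
    then show ?thesis unfolding uniformly_bounded_def by blast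
  qed
  define Ys where "Ys i = (if i = 0 then F else Qfam (Xs i))" for i
  have YQ: "Ys i \<subseteq> Qfam (Xs i)" for i using FQ unfolding Ys_def by auto
  show "\<exists>n Xs. Xs 0 = F \<and> (\<forall>i<n. r_decomposable (R i) (Xs i) (Xs (Suc i))) \<and> uniformly_bounded (Xs n)"
  proof (intro exI conjI allI impI)
    show "Ys 0 = F" unfolding Ys_def by simp
    fix i assume "i < n"
    then have "r_decomposable (R i) (Qfam (Xs i)) (Qfam (Xs (Suc i)))"
      using X(2) Qfam_decomp by blast
    then show "r_decomposable (R i) (Ys i) (Ys (Suc i))"
      using decomp_mono[OF _ YQ[of i]] unfolding Ys_def[of "Suc i"] by simp
  next
    show "uniformly_bounded (Ys n)" using ub_mono[OF ubQ YQ] .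
  qed
qed

lemma pull_decomp:
  assumes "r_decomposable S X Y" "mono_on {0..} \<rho>"
    "\<forall>x\<in>E. \<forall>x'\<in>E. dist (f x) (f x') \<le> \<rho> (dist x x')" "\<rho> (R+1) \<le> S" "0 \<le> R"
  shows "r_decomposable R ((\<lambda>U. {x\<in>E. f x \<in> U}) ` X) ((\<lambda>U. {x\<in>E. f x \<in> U}) ` Y)"
  unfolding r_decomposable_def
proof (intro ballI)
  define pull where "pull U = {x\<in>E. f x \<in> U}" for U
  fix T assume "T \<in> (\<lambda>U. {x\<in>E. f x \<in> U}) ` X"
  then obtain U where U: "U \<in> X" "T = pull U" unfolding pull_def by blast
  from assms(1) U(1) obtain Z0 Z1 where d: "r_decomposition S U Y Z0 Z1"
    unfolding r_decomposable_def by blast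
  have WU: "U = \<Union>Z0 \<union> \<Union>Z1" and dj0: "r_disjoint_family S Z0" and dj1: "r_disjoint_family S Z1"
    and s0: "Z0 \<subseteq> Y" and s1: "Z1 \<subseteq> Y" using d unfolding r_decomposition_def by auto
  have union: "T = \<Union>(pull ` Z0) \<union> \<Union>(pull ` Z1)" using U(2) WU unfolding pull_def by blast
  have disj: "r_disjoint_family R (pull ` Zj)" if dj: "r_disjoint_family S Zj" for Zj
    unfolding r_disjoint_family_def
  proof (intro ballI impI)
    fix P Q assume "P \<in> pull ` Zj" "Q \<in> pull ` Zj" "P \<noteq> Q"
    then obtain V V' where V: "V \<in> Zj" "V' \<in> Zj" "P = pull V" "Q = pull V'" "V \<noteq> V'" by blast
    then obtain s where s: "s > S" "\<forall>x\<in>V. \<forall>y\<in>V'. s \<le> dist x y"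
      using dj unfolding r_disjoint_family_def r_disjoint_def by blast
    show "r_disjoint R P Q" unfolding r_disjoint_def
    proof (intro exI[of _ "R+1"] conjI ballI)
      show "R + 1 > R" by simp
      fix a b assume "a \<in> P" "b \<in> Q"
      then have ab: "a \<in> E" "b \<in> E" "f a \<in> V" "f b \<in> V'" using V unfolding pull_def by auto
      show "R + 1 \<le> dist a b"
      proof (rule ccontr)
        assume "\<not> R + 1 \<le> dist a b"
        then have "\<rho> (dist a b) \<le> \<rho> (R+1)" using assms(2,5)
          by (intro mono_onD[OF assms(2)]) auto
        moreover have "dist (f a) (f b) \<le> \<rho> (dist a b)" using assms(3) ab by blast
        moreover have "s \<le> dist (f a) (f b)" using s ab by blast
        ultimately show False using s assms(4) by linarith
      qed
    qed
  qed
  have "r_decomposition R T (pull ` Y) (pull ` Z0) (pull ` Z1)"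
    unfolding r_decomposition_def
    using union disj[OF dj0] disj[OF dj1] s0 s1 by blast
  then show "\<exists>Z0 Z1. r_decomposition R T ((\<lambda>U. {x\<in>E. f x \<in> U}) ` Y) Z0 Z1"
    unfolding pull_def by blast
qed



lemma sFDC_empty: "sFDC {{}}"
  unfolding sFDC_def
  by (intro allI impI exI[of _ 0] exI[of _ "\<lambda>_. {{}}"]) (auto simp: uniformly_bounded_def)

lemma fibering:
  fixes f :: "'a::metric_space \<Rightarrow> 'b::metric_space"
  assumes maps: "f ` E \<subseteq> B" and rho: "mono_on {0..} \<rho>" "\<forall>t\<ge>0. 0 \<le> \<rho> t"
    "\<forall>x\<in>E. \<forall>x'\<in>E. dist (f x) (f x') \<le> \<rho> (dist x x')"
    and base: "sFDC {B}"
    and P: "\<And>\<U>. uniformly_bounded \<U> \<Longrightarrow> sFDC ((\<lambda>U. {x\<in>E. f x \<in> U}) ` \<U>)"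
  shows "sFDC {E}"
  unfolding sFDC_def
proof (intro allI impI)
  fix R :: "nat \<Rightarrow> real" assume R: "(\<forall>i. 0 < R i) \<and> strict_mono R"
  define S where "S i = \<rho> (R i + 1) + real i + 1" for i
  have Spos: "\<forall>i. 0 < S i"
  proof
    fix i have "0 \<le> \<rho> (R i + 1)" using rho(2) R by (metis add_nonneg_nonneg less_eq_real_def zero_le_one)
    then show "0 < S i" unfolding S_def by simp
  qed
  have Smono: "strict_mono S"
    unfolding strict_mono_Suc_iff
  proof
    fix i
    have "R i < R (Suc i)" using R strict_monoD by blast
    then have "\<rho> (R i + 1) \<le> \<rho> (R (Suc i) + 1)" using R
      by (intro mono_onD[OF rho(1)]) (auto simp: less_eq_real_def, smt (verit), smt (verit))
    then show "S i < S (Suc i)" unfolding S_def by simp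
  qed
  from base[unfolded sFDC_def, rule_format, OF conjI[OF Spos Smono]] obtain m Bs where Bs: "Bs 0 = {B}"
    "\<forall>i<m. r_decomposable (S i) (Bs i) (Bs (Suc i))" "uniformly_bounded (Bs m)"
    by blast
  define pull where "pull U = {x\<in>E. f x \<in> U}" for U
  have sm: "sFDC (pull ` Bs m)" unfolding pull_def by (rule P[OF Bs(3)])
  define R' where "R' j = R (m + j)" for j
  have R': "(\<forall>j. 0 < R' j) \<and> strict_mono R'"
    using R unfolding R'_def strict_mono_def by auto
  from sm[unfolded sFDC_def, rule_format, OF R'] obtain k Ys where Ys: "Ys 0 = pull ` Bs m"
    "\<forall>j<k. r_decomposable (R' j) (Ys j) (Ys (Suc j))" "uniformly_bounded (Ys k)"
    by blast
  define Xs where "Xs i = (if i \<le> m then pull ` Bs i else Ys (i - m))" for i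
  have Xs_ge: "Xs i = Ys (i - m)" if "m \<le> i" for i
    using that Ys(1) unfolding Xs_def by (cases "i = m") auto
  show "\<exists>n Xs. Xs 0 = {E} \<and> (\<forall>i<n. r_decomposable (R i) (Xs i) (Xs (Suc i))) \<and> uniformly_bounded (Xs n)"
  proof (intro exI[of _ "m+k"] exI[of _ Xs] conjI allI impI)
    have "pull B = E" using maps unfolding pull_def by auto
    then show "Xs 0 = {E}" unfolding Xs_def using Bs(1) by simp
  next
    fix i assume i: "i < m + k"
    show "r_decomposable (R i) (Xs i) (Xs (Suc i))"
    proof (cases "i < m")
      case True
      then have "r_decomposable (S i) (Bs i) (Bs (Suc i))" using Bs(2) by blast
      moreover have "\<rho> (R i + 1) \<le> S i" unfolding S_def by simp
      moreover have "0 \<le> R i" using R less_eq_real_def by blast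
      ultimately have "r_decomposable (R i) (pull ` Bs i) (pull ` Bs (Suc i))"
        unfolding pull_def using pull_decomp[OF _ rho(1) rho(3)] by blast
      then show ?thesis unfolding Xs_def using True by simp
    next
      case False
      then have "i - m < k" "Suc i - m = Suc (i - m)" "R i = R' (i - m)"
        using i unfolding R'_def by auto
      then show ?thesis using Ys(2) Xs_ge False by simp
    qed
  next
    show "uniformly_bounded (Xs (m + k))" using Xs_ge[of "m+k"] Ys(3) by simp
  qed
qed

theorem theorem5p3:
  fixes f :: "'a::metric_space \<Rightarrow> 'b::metric_space" and E :: "'a set" and B :: "'b set"
  assumes maps: "f ` E \<subseteq> B"
    and ue: "uniformly_expansive f E"
    and hom: "homogeneous f E B"
    and base: "sFDC_space B"
  shows "((\<exists>b0\<in>B. \<forall>r>0. sFDC_space {x\<in>E. f x \<in> ball b0 r}) \<longrightarrow> sFDC_space E) \<and>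
         ((\<forall>D. D \<subseteq> B \<and> bounded D \<longrightarrow> sFDC_space {x\<in>E. f x \<in> D}) \<longrightarrow> sFDC_space E)"
proof -
  from ue obtain \<rho> :: "real \<Rightarrow> real" where rho: "mono_on {0..} \<rho>" "\<forall>t\<ge>0. 0 \<le> \<rho> t"
    "\<forall>x\<in>E. \<forall>x'\<in>E. dist (f x) (f x') \<le> \<rho> (dist x x')"
    unfolding uniformly_expansive_def by blast
  have A: "(\<exists>b0\<in>B. \<forall>r>0. sFDC_space {x\<in>E. f x \<in> ball b0 r}) \<longrightarrow> sFDC_space E"
  proof
    assume "\<exists>b0\<in>B. \<forall>r>0. sFDC_space {x\<in>E. f x \<in> ball b0 r}"
    then obtain b0 where b0: "b0 \<in> B" "\<And>r. r > 0 \<Longrightarrow> sFDC {{x\<in>E. f x \<in> ball b0 r}}"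
      unfolding sFDC_space_def by blast
    show "sFDC_space E"
    proof (cases "E = {}")
      case True then show ?thesis unfolding sFDC_space_def using sFDC_empty by simp
    next
      case False
      then obtain x0 where x0: "x0 \<in> E" by blast
      define b1 where "b1 = f x0"
      define \<delta> where "\<delta> = dist b0 b1"
      have b1B: "b1 \<in> B" using maps x0 unfolding b1_def by blast
      show ?thesis unfolding sFDC_space_def
      proof (rule fibering[OF maps rho])
        show "sFDC {B}" using base unfolding sFDC_space_def .
      next
        fix \<U> :: "'b set set" assume "uniformly_bounded \<U>"
        then obtain C where C: "\<forall>U\<in>\<U>. \<forall>a\<in>U. \<forall>b\<in>U. dist a b \<le> C"
          unfolding uniformly_bounded_def by blast
        define r where "r = \<bar>C\<bar> + \<delta> + 1"
        have "r > 0" unfolding r_def \<delta>_def by (smt (verit) abs_ge_zero zero_le_dist)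
        define Ar where "Ar = {x\<in>E. f x \<in> ball b0 r}"
        have sA: "sFDC {Ar}" using b0(2)[OF \<open>r > 0\<close>] unfolding Ar_def .
        show "sFDC ((\<lambda>U. {x\<in>E. f x \<in> U}) ` \<U>)"
        proof (rule sFDC_copies[OF sA], intro ballI)
          fix Z assume "Z \<in> (\<lambda>U. {x\<in>E. f x \<in> U}) ` \<U>"
          then obtain U where U: "U \<in> \<U>" "Z = {x\<in>E. f x \<in> U}" by blast
          show "\<exists>g. dpres g Ar \<and> Z \<subseteq> g ` Ar"
          proof (cases "Z = {}")
            case True then show ?thesis unfolding dpres_def by (intro exI[of _ id]) auto
          next
            case False
            then obtain z0 where z0: "z0 \<in> E" "f z0 \<in> U" using U by blast
            have hb: "b1 \<in> f ` E" "f z0 \<in> f ` E" using x0 z0 unfolding b1_def by auto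
            obtain \<phi> \<psi> where ph: "self_isometry E \<phi>" "self_isometry B \<psi>"
              "\<forall>x\<in>E. f (\<phi> x) = \<psi> (f x)" "\<psi> b1 = f z0"
              using hom[unfolded homogeneous_def, rule_format, OF hb] by blast
            have "dpres \<phi> Ar" using ph(1) unfolding dpres_def self_isometry_def Ar_def by auto
            moreover have "Z \<subseteq> \<phi> ` Ar"
            proof
              fix z assume "z \<in> Z"
              then have z: "z \<in> E" "f z \<in> U" using U by auto
              then obtain x where x: "x \<in> E" "z = \<phi> x" using ph(1) unfolding self_isometry_def bij_betw_def by blast
              have fxB: "f x \<in> B" using maps x by blast
              have "dist b1 (f x) = dist (\<psi> b1) (\<psi> (f x))" using ph(2) b1B fxB unfolding self_isometry_def by auto
              also have "\<dots> = dist (f z0) (f z)" using ph(3,4) x by simp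
              also have "\<dots> \<le> C" using C U(1) z z0 by blast
              finally have "dist b1 (f x) \<le> C" .
              then have "dist b0 (f x) < r" unfolding r_def \<delta>_def
                using dist_triangle[of b0 "f x" b1] by linarith
              then have "x \<in> Ar" unfolding Ar_def using x by simp
              then show "z \<in> \<phi> ` Ar" using x by blast
            qed
            ultimately show ?thesis by blast
          qed
        qed
      qed
    qed
  qed
  moreover have "(\<forall>D. D \<subseteq> B \<and> bounded D \<longrightarrow> sFDC_space {x\<in>E. f x \<in> D}) \<longrightarrow> sFDC_space E"
  proof
    assume H: "\<forall>D. D \<subseteq> B \<and> bounded D \<longrightarrow> sFDC_space {x\<in>E. f x \<in> D}"
    show "sFDC_space E"
    proof (cases "E = {}")
      case True then show ?thesis unfolding sFDC_space_def using sFDC_empty by simp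
    next
      case False
      then obtain x0 where x0: "x0 \<in> E" by blast
      have "f x0 \<in> B" using maps x0 by blast
      moreover have "\<forall>r>0. sFDC_space {x\<in>E. f x \<in> ball (f x0) r}"
      proof (intro allI impI)
        fix r :: real assume "r > 0"
        have "{x\<in>E. f x \<in> ball (f x0) r} = {x\<in>E. f x \<in> ball (f x0) r \<inter> B}" using maps by auto
        moreover have "sFDC_space {x\<in>E. f x \<in> ball (f x0) r \<inter> B}"
          by (rule H[rule_format]) (auto intro: bounded_Int bounded_ball)
        ultimately show "sFDC_space {x\<in>E. f x \<in> ball (f x0) r}" by simp
      qed
      ultimately show ?thesis using A by blast
    qed
  qed
  ultimately show ?thesis by blast
qed

end
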